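(* Let $x^*\in\mathbb{R}^n$ satisfy $Ax^*=b$, let $\ell\ge1$ and let $x_1,\ldots,x_\ell\in\mathbb{R}^n$ be affinely independent points such that \[x_\ell=\operatorname{argmin}_{\xi\in\operatorname{aff}(x_1,\ldots,x_\ell)}\|\xi-x^*\|^2\] and $P(x_\ell)\notin\operatorname{aff}(x_1,\ldots,x_\ell)$. Let \[V=(x_1-x_\ell,\ldots,x_{\ell-1}-x_\ell)\in\mathbb{R}^{n\times(\ell-1)},\quad M=(V,\,P(x_\ell)-x_\ell)\in\mathbb{R}^{n\times\ell},\quad \gamma=\tfrac12\big(\|r(x_\ell)\|^2+\|P(x_\ell)-x_\ell\|^2\big).\] Then the minimizer $s^*=\operatorname{argmin}_{s\in\mathbb{R}^\ell}\|x_\ell+Ms-x^*\|^2$ exists, is unique, and is the unique solution of the linear system $M^TMs=\gamma e_\ell$, where $e_\ell\in\mathbb{R}^\ell$ is the $\ell$-th unit vector. Moreover, \[\|x_\ell-x^*\|^2-\|x_\ell+Ms^*-x^*\|^2=\gamma s^*_\ell=\gamma^2\frac{\det(V^TV)}{\det(M^TM)}.\]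
   Context: Let $A=(a_1,\ldots,a_m)^T\in\mathbb{R}^{m\times n}$ with rows $a_j\in\mathbb{R}^n\setminus\{0\}$, and let $b\in\mathbb{R}^m$ lie in the range of $A$. Norms are Euclidean. For $j=1,\ldots,m$ define the projectors $P_j:\mathbb{R}^n\to\mathbb{R}^n$, $P_j(x)=\big(I-\frac{a_ja_j^T}{\|a_j\|^2}\big)x+\frac{b_j}{\|a_j\|^2}a_j$ (the orthogonal projection onto $\{z:a_j^Tz=b_j\}$), and the Kaczmarz cycle $P=P_m\circ\cdots\circ P_1$. The residual $r:\mathbb{R}^n\to\mathbb{R}^m$ is defined by $r_1(x)=(a_1^Tx-b_1)/\|a_1\|$ and $r_j(x)=(a_j^T(P_{j-1}\circ\cdots\circ P_1)(x)-b_j)/\|a_j\|$ for $j=2,\ldots,m$. $\operatorname{aff}(\cdot)$ denotes the affine hull. When $\ell=1$, $V$ is the empty matrix and $\det(V^TV)$ is taken to be $1$. *)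

theory Defs imports "HOL-Analysis.Analysis" "Jordan_Normal_Form.Determinant" begin

(* Rows a_1,...,a_m of A are  a 1, ..., a m;  right-hand side b_1,...,b_m is  b 1, ..., b m. *)

definition kproj :: "(nat \<Rightarrow> real^'n) \<Rightarrow> (nat \<Rightarrow> real) \<Rightarrow> nat \<Rightarrow> real^'n \<Rightarrow> real^'n" where
  "kproj a b j x = x - ((a j \<bullet> x) / (norm (a j))^2) *\<^sub>R a j + (b j / (norm (a j))^2) *\<^sub>R a j"

fun kpart :: "(nat \<Rightarrow> real^'n) \<Rightarrow> (nat \<Rightarrow> real) \<Rightarrow> nat \<Rightarrow> real^'n \<Rightarrow> real^'n" where
  "kpart a b 0 x = x"
| "kpart a b (Suc k) x = kproj a b (Suc k) (kpart a b k x)"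

definition kcycle :: "(nat \<Rightarrow> real^'n) \<Rightarrow> (nat \<Rightarrow> real) \<Rightarrow> nat \<Rightarrow> real^'n \<Rightarrow> real^'n" where
  "kcycle a b m = kpart a b m"

definition kresid :: "(nat \<Rightarrow> real^'n) \<Rightarrow> (nat \<Rightarrow> real) \<Rightarrow> nat \<Rightarrow> real^'n \<Rightarrow> real" where
  "kresid a b j x = (a j \<bullet> kpart a b (j - 1) x - b j) / norm (a j)"

definition kresid_sqnorm :: "(nat \<Rightarrow> real^'n) \<Rightarrow> (nat \<Rightarrow> real) \<Rightarrow> nat \<Rightarrow> real^'n \<Rightarrow> real" where
  "kresid_sqnorm a b m x = (\<Sum>j = 1..m. (kresid a b j x)^2)"

end

theory Submission imports Defs begin

lemma kproj_alt: "kproj a b j u = u - ((a j \<bullet> u - b j) / (norm (a j))^2) *\<^sub>R a j"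
  unfolding kproj_def by (simp add: diff_divide_distrib scaleR_diff_left algebra_simps)

lemma kacz_pyth:
  fixes a :: "nat \<Rightarrow> real^'n"
  assumes rows_nz: "\<forall>j\<in>{1..m}. a j \<noteq> 0"
    and sol: "\<forall>j\<in>{1..m}. a j \<bullet> xstar = b j"
  shows "k \<le> m \<Longrightarrow> (norm (kpart a b k z - xstar))^2 + (\<Sum>j = 1..k. (kresid a b j z)^2) = (norm (z - xstar))^2"
proof (induction k)
  case 0 then show ?case by simp
next
  case (Suc k)
  let ?A = "a (Suc k)" and ?B = "b (Suc k)" and ?u = "kpart a b k z"
  have A0: "?A \<noteq> 0" and AB: "?A \<bullet> xstar = ?B" using Suc.prems rows_nz sol by auto
  define c where "c = (?A \<bullet> ?u - ?B) / (norm ?A)^2"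
  have nA: "(norm ?A)^2 > 0" using A0 by simp
  have cA: "c * (norm ?A)^2 = ?A \<bullet> ?u - ?B" unfolding c_def using nA by simp
  have kp: "kpart a b (Suc k) z = ?u - c *\<^sub>R ?A" by (simp add: kproj_alt c_def)
  have r: "(kresid a b (Suc k) z)^2 = c * (?A \<bullet> ?u - ?B)"
    unfolding kresid_def using nA by (simp add: c_def power_divide power2_eq_square)
  have "(norm (?u - c *\<^sub>R ?A - xstar))^2 = (norm (?u - xstar))^2 - 2 * c * (?A \<bullet> (?u - xstar)) + c^2 * (norm ?A)^2"
    unfolding power2_norm_eq_inner by (simp add: algebra_simps inner_commute power2_eq_square)
  also have "?A \<bullet> (?u - xstar) = ?A \<bullet> ?u - ?B" using AB by (simp add: inner_diff_right)
  finally have e00: "(norm (?u - c *\<^sub>R ?A - xstar))^2 = (norm (?u - xstar))^2 - 2 * c * (?A \<bullet> ?u - ?B) + c^2 * (norm ?A)^2" .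
  have cc: "c^2 * (norm ?A)^2 = c * (?A \<bullet> ?u - ?B)" using cA by (simp add: power2_eq_square)
  have e0: "(norm (?u - c *\<^sub>R ?A - xstar))^2 = (norm (?u - xstar))^2 - c * (?A \<bullet> ?u - ?B)"
    using e00 cc by linarith
  have e: "(norm (kpart a b (Suc k) z - xstar))^2 = (norm (?u - xstar))^2 - c * (?A \<bullet> ?u - ?B)"
    unfolding kp by (rule e0)
  show ?case using Suc e r by simp
qed

lemma quad_zero:
  fixes c D :: real
  assumes "\<forall>t. 0 \<le> 2*t*c + t^2*D" "D \<ge> 0" shows "c = 0"
proof -
  define t where "t = - c / (D + 1)"
  have "0 \<le> 2*t*c + t^2*D" using assms by blast
  hence "0 \<le> (2*t*c + t^2*D) * (D+1)^2" using assms by simp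
  also have "\<dots> = 2*c*(t*(D+1))*(D+1) + (t*(D+1))^2*D" by (simp add: algebra_simps power2_eq_square)
  also have "t*(D+1) = -c" unfolding t_def using assms(2) by simp
  also have "2*c*(-c)*(D+1) + (-c)^2*D = - ((c*c) * (D + 2))" by (simp add: algebra_simps power2_eq_square)
  finally have "(c*c) * (D+2) \<le> 0" by simp
  moreover have "D + 2 > 0" using assms by simp
  ultimately have "c*c \<le> 0" by (simp add: mult_le_0_iff)
  thus ?thesis by (simp add: mult_le_0_iff) linarith
qed

lemma min_orth:
  fixes w d :: "real^'n"
  assumes "\<forall>t. (norm w)^2 \<le> (norm (w + t *\<^sub>R d))^2" shows "w \<bullet> d = 0"
proof -
  have "\<forall>t. 0 \<le> 2*t*(w \<bullet> d) + t^2*(d \<bullet> d)"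
  proof
    fix t :: real
    have "(norm (w + t *\<^sub>R d))^2 = (norm w)^2 + 2*t*(w \<bullet> d) + t^2*(d \<bullet> d)"
      unfolding power2_norm_eq_inner by (simp add: algebra_simps inner_commute power2_eq_square)
    thus "0 \<le> 2*t*(w \<bullet> d) + t^2*(d \<bullet> d)" using assms by smt
  qed
  thus ?thesis using quad_zero[of "w \<bullet> d" "d \<bullet> d"] by simp
qed


lemma generic:
  fixes col :: "nat \<Rightarrow> real^'n" and w :: "real^'n" and g :: real and l :: nat
  assumes l: "l \<ge> 1"
    and indep: "\<And>t. (\<Sum>i<l. t i *\<^sub>R col i) = 0 \<Longrightarrow> \<forall>i<l. t i = 0"
    and orth: "\<And>i. i < l \<Longrightarrow> w \<bullet> col i = (if i = l - 1 then - g else 0)"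
    and Mv_def: "Mv = (\<lambda>s. \<Sum>i<l. vec_index s i *\<^sub>R col i)"
    and G_def: "G = mat l l (\<lambda>(i, j). col i \<bullet> col j)"
    and V_def: "V = mat (l - 1) (l - 1) (\<lambda>(i, j). col i \<bullet> col j)"
    and f_def: "f = (\<lambda>s. (norm (w + Mv s))^2)"
    and is_min_def: "is_min = (\<lambda>s. s \<in> carrier_vec l \<and> (\<forall>t\<in>carrier_vec l. f s \<le> f t))"
  shows "(\<exists>!s. is_min s)
        \<and> (\<forall>s\<in>carrier_vec l. is_min s \<longleftrightarrow> G *\<^sub>v s = g \<cdot>\<^sub>v unit_vec l (l - 1))
        \<and> (\<forall>s. is_min s \<longrightarrow>
              (norm w)^2 - f s = g * vec_index s (l - 1)
            \<and> g * vec_index s (l - 1) = g^2 * Determinant.det V / Determinant.det G)"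
proof -
  define e where "e = g \<cdot>\<^sub>v unit_vec l (l - 1)"
  define N where "N = (\<lambda>s. G *\<^sub>v s = e)"
  have ec: "e \<in> carrier_vec l" unfolding e_def by simp
  have Gc: "G \<in> carrier_mat l l" by (simp add: G_def)
  have GMv: "(G *\<^sub>v s) $ i = col i \<bullet> Mv s" if "s \<in> carrier_vec l" "i < l" for s i
    using that by (simp add: G_def Mv_def scalar_prod_def inner_sum_right lessThan_atLeast0 mult.commute)
  have Nchar: "N s \<longleftrightarrow> (\<forall>i<l. col i \<bullet> Mv s = (if i = l - 1 then g else 0))" if s: "s \<in> carrier_vec l" for s
  proof -
    have "N s \<longleftrightarrow> (\<forall>i<l. (G *\<^sub>v s) $ i = e $ i)"
      unfolding N_def using Gc ec s by (auto intro!: eq_vecI)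
    also have "\<dots> \<longleftrightarrow> (\<forall>i<l. col i \<bullet> Mv s = (if i = l - 1 then g else 0))"
      using s l by (simp add: GMv e_def)
    finally show ?thesis .
  qed
  have perp: "(w + Mv s) \<bullet> (\<Sum>i<l. t i *\<^sub>R col i) = 0" if s: "s \<in> carrier_vec l" "N s" for s t
  proof -
    have "(w + Mv s) \<bullet> (\<Sum>i<l. t i *\<^sub>R col i) = (\<Sum>i<l. t i * (w \<bullet> col i + col i \<bullet> Mv s))"
      by (simp add: inner_sum_right inner_add_left inner_commute algebra_simps)
    also have "\<dots> = 0" using orth Nchar[OF s(1)] s(2) by (intro sum.neutral) auto
    finally show ?thesis .
  qed
  have Mvdiff: "Mv t - Mv s = (\<Sum>i<l. (t$i - s$i) *\<^sub>R col i)" for s t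
    by (simp add: Mv_def sum_subtractf scaleR_diff_left)
  have pyth: "f t = f s + (norm (Mv t - Mv s))^2" if s: "s \<in> carrier_vec l" "N s" for s t
  proof -
    have "w + Mv t = (w + Mv s) + (Mv t - Mv s)" by simp
    moreover have o: "(w + Mv s) \<bullet> (Mv t - Mv s) = 0"
      unfolding Mvdiff by (rule perp[OF s])
    have sq: "(norm (x + y))^2 = (norm x)^2 + 2*(x \<bullet> y) + (norm y)^2" for x y :: "real^'n"
      unfolding power2_norm_eq_inner by (simp add: inner_add_left inner_add_right inner_commute)
    ultimately show ?thesis unfolding f_def using sq[of "w + Mv s" "Mv t - Mv s"] o by simp
  qed
  have inj: "t = s" if "s \<in> carrier_vec l" "t \<in> carrier_vec l" "Mv t = Mv s" for s t
  proof -
    have "(\<Sum>i<l. (t$i - s$i) *\<^sub>R col i) = 0" using that Mvdiff[of t s] by simp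
    hence "\<forall>i<l. t$i - s$i = 0" by (rule indep)
    thus ?thesis using that by (intro eq_vecI) auto
  qed
  have nMv: "(norm (Mv s))^2 = (\<Sum>i<l. s$i * (G *\<^sub>v s) $ i)" if s: "s \<in> carrier_vec l" for s
  proof -
    have "(norm (Mv s))^2 = Mv s \<bullet> Mv s" by (simp add: power2_norm_eq_inner)
    also have "\<dots> = (\<Sum>i<l. s$i * (col i \<bullet> Mv s))"
      by (subst (1) Mv_def) (simp add: inner_sum_left)
    also have "\<dots> = (\<Sum>i<l. s$i * (G *\<^sub>v s) $ i)" using GMv[OF s] by simp
    finally show ?thesis .
  qed
  have detG: "Determinant.det G \<noteq> 0"
  proof
    assume "Determinant.det G = 0"
    then obtain v where v: "v \<in> carrier_vec l" "v \<noteq> 0\<^sub>v l" "G *\<^sub>v v = 0\<^sub>v l"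
      using det_0_iff_vec_prod_zero[OF Gc] by auto
    have "(norm (Mv v))^2 = 0" using nMv[OF v(1)] v(3) by simp
    hence "Mv v = Mv (0\<^sub>v l)" by (simp add: Mv_def)
    hence "v = 0\<^sub>v l" using inj[OF _ v(1)] by simp
    with v(2) show False by simp
  qed
  define s0 where "s0 = (1 / Determinant.det G) \<cdot>\<^sub>v (adj_mat G *\<^sub>v e)"
  have s0c: "s0 \<in> carrier_vec l" unfolding s0_def using adj_mat(1)[OF Gc] ec by simp
  have Ns0: "N s0"
  proof -
    have "G *\<^sub>v s0 = (1 / Determinant.det G) \<cdot>\<^sub>v (G *\<^sub>v (adj_mat G *\<^sub>v e))"
      unfolding s0_def using Gc adj_mat(1)[OF Gc] ec by (simp add: mult_mat_vec)
    also have "G *\<^sub>v (adj_mat G *\<^sub>v e) = (G * adj_mat G) *\<^sub>v e"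
      using Gc adj_mat(1)[OF Gc] ec by simp
    also have "\<dots> = (Determinant.det G \<cdot>\<^sub>m 1\<^sub>m l) *\<^sub>v e" using adj_mat(2)[OF Gc] by simp
    also have "\<dots> = Determinant.det G \<cdot>\<^sub>v e"
    proof (rule eq_vecI)
      fix i assume i: "i < dim_vec (Determinant.det G \<cdot>\<^sub>v e)"
      hence il: "i < l" using ec by simp
      have eqf: "(\<lambda>ia. Determinant.det G * (if ia = i then 1 else 0) * e $ ia) = (\<lambda>ia. if ia = i then Determinant.det G * e $ ia else 0)"
        by auto
      have "((Determinant.det G \<cdot>\<^sub>m 1\<^sub>m l) *\<^sub>v e) $ i = (\<Sum>ia = 0..<l. Determinant.det G * (if ia = i then 1 else 0) * e $ ia)"
        using il ec by (simp add: scalar_prod_def)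
      also have "\<dots> = Determinant.det G * e $ i" unfolding eqf using il by simp
      finally show "((Determinant.det G \<cdot>\<^sub>m 1\<^sub>m l) *\<^sub>v e) $ i = (Determinant.det G \<cdot>\<^sub>v e) $ i"
        using il ec by simp
    qed (use ec in simp)
    finally show ?thesis unfolding N_def using detG ec by (intro eq_vecI) auto
  qed
  have min_N: "is_min s" if "s \<in> carrier_vec l" "N s" for s
    using that pyth unfolding is_min_def by (metis le_add_same_cancel1 zero_le_power2)
  have min_s0: "s = s0" if "is_min s" for s
  proof -
    have sc: "s \<in> carrier_vec l" and le: "f s \<le> f s0" using that s0c unfolding is_min_def by auto
    have "f s = f s0 + (norm (Mv s - Mv s0))^2" using pyth[OF s0c Ns0] .
    hence "norm (Mv s - Mv s0) = 0" using le by simp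
    thus ?thesis using inj[OF s0c sc] by simp
  qed
  have iff: "is_min s \<longleftrightarrow> s \<in> carrier_vec l \<and> N s" for s
    using min_N min_s0 s0c Ns0 by blast
  have part1: "\<exists>!s. is_min s" using iff s0c Ns0 min_s0 by blast
  have part2: "\<forall>s\<in>carrier_vec l. is_min s \<longleftrightarrow> G *\<^sub>v s = g \<cdot>\<^sub>v unit_vec l (l - 1)"
    using iff unfolding N_def e_def by blast
  have l1: "l - 1 < l" using l by simp
  have part3: "(norm w)^2 - f s = g * s $ (l - 1) \<and> g * s $ (l - 1) = g^2 * Determinant.det V / Determinant.det G"
    if m: "is_min s" for s
  proof -
    have s: "s \<in> carrier_vec l" "N s" using iff m by auto
    have "f s = (w + Mv s) \<bullet> w + (w + Mv s) \<bullet> Mv s"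
      unfolding f_def power2_norm_eq_inner by (simp add: inner_add_right)
    also have "(w + Mv s) \<bullet> Mv s = 0" using perp[OF s, of "\<lambda>i. s$i"] by (simp add: Mv_def)
    also have "(w + Mv s) \<bullet> w = w \<bullet> w + (\<Sum>i<l. s$i * (w \<bullet> col i))"
    proof -
      have "(w + Mv s) \<bullet> w = w \<bullet> w + (\<Sum>i<l. s$i * (col i \<bullet> w))"
        by (simp add: inner_add_left Mv_def inner_sum_left)
      also have "(\<Sum>i<l. s$i * (col i \<bullet> w)) = (\<Sum>i<l. s$i * (w \<bullet> col i))"
        by (intro sum.cong refl) (simp add: inner_commute)
      finally show ?thesis .
    qed
    also have "(\<Sum>i<l. s$i * (w \<bullet> col i)) = (\<Sum>i<l. if i = l - 1 then - g * s$i else 0)"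
      using orth by (intro sum.cong) auto
    also have "\<dots> = - g * s$(l-1)" using l1 by simp
    finally have v1: "(norm w)^2 - f s = g * s $ (l - 1)" by (simp add: power2_norm_eq_inner)
    define R where "R = replace_col G e (l - 1)"
    have Rc: "R \<in> carrier_mat l l" using Gc by (simp add: R_def replace_col_def)
    have cr: "Determinant.det R = s $ (l - 1) * Determinant.det G"
      using cramer_lemma_mat[OF Gc s(1) l1] s(2) unfolding R_def N_def by simp
    have "Determinant.det R = (\<Sum>i<l. R $$ (i, l - 1) * cofactor R i (l - 1))"
      by (rule laplace_expansion_column[OF Rc l1])
    also have "\<dots> = (\<Sum>i<l. if i = l - 1 then g * cofactor R i (l - 1) else 0)"
      using Gc by (intro sum.cong) (auto simp: R_def replace_col_def e_def)
    also have "\<dots> = g * cofactor R (l - 1) (l - 1)" using l1 by simp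
    also have "cofactor R (l - 1) (l - 1) = Determinant.det (mat_delete R (l - 1) (l - 1))"
      by (simp add: cofactor_def)
    also have "mat_delete R (l - 1) (l - 1) = V"
      using Gc by (intro eq_matI) (auto simp: mat_delete_def R_def replace_col_def V_def G_def)
    finally have "Determinant.det R = g * Determinant.det V" .
    with cr have "s $ (l - 1) * Determinant.det G = g * Determinant.det V" by simp
    hence "s $ (l - 1) = g * Determinant.det V / Determinant.det G" using detG by (simp add: field_simps)
    hence "g * s $ (l - 1) = g^2 * Determinant.det V / Determinant.det G" by (simp add: power2_eq_square)
    with v1 show ?thesis by simp
  qed
  show ?thesis using part1 part2 part3 by blast
qed


lemma aff_comb:
  fixes x :: "nat \<Rightarrow> real^'n"
  assumes "k' \<le> k" "l = Suc k"
  shows "x l + (\<Sum>i<k'. c i *\<^sub>R (x (i+1) - x l)) \<in> affine hull (x ` {1..l})"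
  using assms(1)
proof (induction k')
  case 0
  then show ?case using assms by (simp add: hull_inc)
next
  case (Suc k')
  have "x l + (\<Sum>i<Suc k'. c i *\<^sub>R (x (i+1) - x l))
      = (x l + (\<Sum>i<k'. c i *\<^sub>R (x (i+1) - x l))) + c k' *\<^sub>R (x (k'+1) - x l)"
    by (simp add: algebra_simps)
  also have "\<dots> \<in> affine hull (x ` {1..l})"
    apply (rule mem_affine_3_minus[OF affine_affine_hull])
    using Suc assms by (auto intro!: hull_inc)
  finally show ?case .
qed

lemma norm_add_sq: "(norm (p + q))^2 = (norm p)^2 + 2*(q \<bullet> p) + (norm (q::real^'n))^2"
  unfolding power2_norm_eq_inner by (simp add: inner_add_left inner_add_right inner_commute)

theorem theorem7:
  fixes a :: "nat \<Rightarrow> real^'n" and b :: "nat \<Rightarrow> real" and m :: nat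
    and l :: nat and x :: "nat \<Rightarrow> real^'n" and xstar :: "real^'n"
  assumes rows_nz: "\<forall>j\<in>{1..m}. a j \<noteq> 0"
    and b_range: "\<exists>z. \<forall>j\<in>{1..m}. a j \<bullet> z = b j"
    and sol: "\<forall>j\<in>{1..m}. a j \<bullet> xstar = b j"
    and l_pos: "l \<ge> 1"
    and inj: "inj_on x {1..l}"
    and aff_indep: "\<not> affine_dependent (x ` {1..l})"
    and argmin: "\<forall>\<xi>\<in>affine hull (x ` {1..l}). (norm (x l - xstar))^2 \<le> (norm (\<xi> - xstar))^2"
    and notin: "kcycle a b m (x l) \<notin> affine hull (x ` {1..l})"
  shows
    "let col = (\<lambda>i. if i < l - 1 then x (i + 1) - x l else kcycle a b m (x l) - x l);
         Mv = (\<lambda>s. \<Sum>i<l. vec_index s i *\<^sub>R col i);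
         MtM = mat l l (\<lambda>(i, j). col i \<bullet> col j);
         VtV = mat (l - 1) (l - 1) (\<lambda>(i, j). col i \<bullet> col j);
         \<gamma> = (kresid_sqnorm a b m (x l) + (norm (kcycle a b m (x l) - x l))^2) / 2;
         f = (\<lambda>s. (norm (x l + Mv s - xstar))^2);
         is_min = (\<lambda>s. s \<in> carrier_vec l \<and> (\<forall>t\<in>carrier_vec l. f s \<le> f t))
     in (\<exists>!s. is_min s)
        \<and> (\<forall>s\<in>carrier_vec l. is_min s \<longleftrightarrow> MtM *\<^sub>v s = \<gamma> \<cdot>\<^sub>v unit_vec l (l - 1))
        \<and> (\<forall>s. is_min s \<longrightarrow>
              (norm (x l - xstar))^2 - f s = \<gamma> * vec_index s (l - 1)
            \<and> \<gamma> * vec_index s (l - 1) = \<gamma>^2 * Determinant.det VtV / Determinant.det MtM)"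
proof -
  obtain k where lk: "l = Suc k" using l_pos by (cases l) auto
  define y where "y = kcycle a b m (x l)"
  define col where "col = (\<lambda>i. if i < l - 1 then x (i + 1) - x l else y - x l)"
  define w where "w = x l - xstar"
  define g where "g = (kresid_sqnorm a b m (x l) + (norm (y - x l))^2) / 2"
  have orth: "w \<bullet> col i = (if i = l - 1 then - g else 0)" if i: "i < l" for i
  proof (cases "i = l - 1")
    case True
    have kp: "(norm (y - xstar))^2 + kresid_sqnorm a b m (x l) = (norm w)^2"
      using kacz_pyth[OF rows_nz sol, of m "x l"] unfolding y_def kcycle_def kresid_sqnorm_def w_def
      by simp
    have e: "y - xstar = (y - x l) + w" unfolding w_def by simp
    have "(norm (y - xstar))^2 = (norm (y - x l))^2 + 2 * (w \<bullet> (y - x l)) + (norm w)^2"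
      unfolding e by (rule norm_add_sq)
    with kp have "2 * (w \<bullet> (y - x l)) = - (kresid_sqnorm a b m (x l) + (norm (y - x l))^2)" by linarith
    hence "w \<bullet> (y - x l) = - g" unfolding g_def by (simp add: field_simps)
    thus ?thesis using True unfolding col_def using lk by simp
  next
    case False
    hence ik: "i < k" using i lk by simp
    define d where "d = x (i+1) - x l"
    have "\<forall>t. (norm w)^2 \<le> (norm (w + t *\<^sub>R d))^2"
    proof
      fix t :: real
      have "x l + t *\<^sub>R (x (i+1) - x l) \<in> affine hull (x ` {1..l})"
        apply (rule mem_affine_3_minus[OF affine_affine_hull])
        using ik lk by (auto intro!: hull_inc)
      with argmin have "(norm w)^2 \<le> (norm (x l + t *\<^sub>R (x (i+1) - x l) - xstar))^2"
        unfolding w_def by blast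
      also have "x l + t *\<^sub>R (x (i+1) - x l) - xstar = w + t *\<^sub>R d" unfolding w_def d_def by simp
      finally show "(norm w)^2 \<le> (norm (w + t *\<^sub>R d))^2" .
    qed
    hence "w \<bullet> d = 0" by (rule min_orth)
    thus ?thesis using False ik lk unfolding col_def d_def by simp
  qed
  have indep: "\<forall>i<l. t i = 0" if ts: "(\<Sum>i<l. t i *\<^sub>R col i) = 0" for t
  proof -
    define S where "S = (\<Sum>i<k. t i *\<^sub>R (x (i+1) - x l))"
    have "(\<Sum>i<l. t i *\<^sub>R col i) = S + t k *\<^sub>R (y - x l)"
      unfolding lk S_def col_def by (simp add: sum.lessThan_Suc)
    with ts have Sy: "S + t k *\<^sub>R (y - x l) = 0" by simp
    have tk: "t k = 0"
    proof (rule ccontr)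
      assume tk: "t k \<noteq> 0"
      have "y = x l + (\<Sum>i<k. (- t i / t k) *\<^sub>R (x (i+1) - x l))"
      proof -
        have h1: "t k *\<^sub>R (y - x l) = - S" using Sy by (metis add.commute add_eq_0_iff)
        have "y - x l = (1 / t k) *\<^sub>R (t k *\<^sub>R (y - x l))" using tk by simp
        also have "\<dots> = - (1 / t k) *\<^sub>R S" unfolding h1 by simp
        also have "\<dots> = (\<Sum>i<k. (- t i / t k) *\<^sub>R (x (i+1) - x l))"
          unfolding S_def by (simp add: scaleR_sum_right)
        finally show ?thesis by (simp add: algebra_simps)
      qed
      moreover have "x l + (\<Sum>i<k. (- t i / t k) *\<^sub>R (x (i+1) - x l)) \<in> affine hull (x ` {1..l})"
        by (rule aff_comb[OF order_refl lk])
      ultimately show False using notin unfolding y_def by simp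
    qed
    with Sy have S0: "S = 0" by simp
    define T where "T = (\<lambda>j. if j = l then - (\<Sum>i<k. t i) else t (j - 1))"
    define U where "U = T \<circ> the_inv_into {1..l} x"
    have UT: "U (x j) = T j" if "j \<in> {1..l}" for j
      unfolding U_def using the_inv_into_f_f[OF inj that] by simp
    have sumT1: "sum T {1..k} = (\<Sum>i<k. t i)"
    proof -
      have "sum T {1..k} = sum (\<lambda>j. t (j - 1)) {1..k}"
        unfolding T_def using lk by (intro sum.cong) auto
      also have "\<dots> = sum (\<lambda>j. t (j - 1)) (Suc ` {..<k})" by (simp add: image_Suc_lessThan)
      also have "\<dots> = (\<Sum>i<k. t i)" by (subst sum.reindex) auto
      finally show ?thesis .
    qed
    have sumT2: "(\<Sum>j\<in>{1..k}. T j *\<^sub>R x j) = (\<Sum>i<k. t i *\<^sub>R x (i+1))"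
    proof -
      have "(\<Sum>j\<in>{1..k}. T j *\<^sub>R x j) = (\<Sum>j\<in>{1..k}. t (j - 1) *\<^sub>R x j)"
        unfolding T_def using lk by (intro sum.cong) auto
      also have "\<dots> = (\<Sum>j\<in>Suc ` {..<k}. t (j - 1) *\<^sub>R x j)" by (simp add: image_Suc_lessThan)
      also have "\<dots> = (\<Sum>i<k. t i *\<^sub>R x (i+1))" by (subst sum.reindex) auto
      finally show ?thesis .
    qed
    have fin: "finite (x ` {1..l})" by simp
    have U1: "sum U (x ` {1..l}) = 0"
    proof -
      have "sum U (x ` {1..l}) = sum T {1..l}"
        unfolding sum.reindex[OF inj] using UT by (intro sum.cong) auto
      also have "\<dots> = sum T {1..k} + T l" unfolding lk by simp
      also have "\<dots> = 0" using sumT1 unfolding T_def by simp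
      finally show ?thesis .
    qed
    have U2: "(\<Sum>v\<in>x ` {1..l}. U v *\<^sub>R v) = 0"
    proof -
      have "(\<Sum>v\<in>x ` {1..l}. U v *\<^sub>R v) = (\<Sum>j\<in>{1..l}. T j *\<^sub>R x j)"
        unfolding sum.reindex[OF inj] using UT by (intro sum.cong) auto
      also have "\<dots> = (\<Sum>j\<in>{1..k}. T j *\<^sub>R x j) + T l *\<^sub>R x l" unfolding lk by simp
      also have "\<dots> = (\<Sum>i<k. t i *\<^sub>R x (i+1)) - (\<Sum>i<k. t i) *\<^sub>R x l"
        using sumT2 unfolding T_def by simp
      also have "\<dots> = S" unfolding S_def
        by (simp add: scaleR_diff_right sum_subtractf scaleR_sum_left)
      finally show ?thesis using S0 by simp
    qed
    have U0: "\<forall>v\<in>x ` {1..l}. U v = 0"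
      using aff_indep U1 U2 unfolding affine_dependent_explicit_finite[OF fin] by blast
    show ?thesis
    proof (intro allI impI)
      fix i assume il: "i < l"
      show "t i = 0"
      proof (cases "i = k")
        case True then show ?thesis using tk by simp
      next
        case False
        hence ik: "i < k" using il lk by simp
        have "U (x (i+1)) = 0" using U0 ik lk by auto
        moreover have "U (x (i+1)) = t i" using UT[of "i+1"] ik lk unfolding T_def by auto
        ultimately show ?thesis by simp
      qed
    qed
  qed
  define Mv where "Mv = (\<lambda>s. \<Sum>i<l. vec_index s i *\<^sub>R col i)"
  have fd: "(\<lambda>s. (norm (x l + Mv s - xstar))^2) = (\<lambda>s. (norm (w + Mv s))^2)"
    unfolding w_def by (simp add: algebra_simps)
  note gen = generic[OF l_pos indep orth Mv_def refl refl fd refl]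
  show ?thesis unfolding Let_def using gen unfolding Mv_def col_def y_def g_def w_def .
qed

end
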